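(* In the setting below (Algorithm 3) with all agents truthful, $$0\le\mathbb E_{D\sim\Pi}\mathbb E_D[L_i],\ \ \sup_{D\in\mathcal F}\mathbb E_D[L_i]\ \le\ \frac14\Big(\frac1{|X_i|+|W_i|}+\frac1{|Z_i|}\Big).$$ Moreover, if for every $k$ the distribution of $\varphi_k(X)$, $X\sim D$, is continuous (atomless) for $\Pi$-almost every $D$ (Bayesian) resp. for every $D\in\mathcal F$ (frequentist), then $$\mathbb E_{D\sim\Pi}\mathbb E_D[L_i]=\sup_{D\in\mathcal F}\mathbb E_D[L_i]=\frac16\Big(\frac1{|X_i|+|W_i|}+\frac1{|Z_i|}\Big).$$
   Context: Setting (Algorithm 3, truthful agents). Fix $m\ge2$ agents, a measurable data space $\mathcal X$, measurable feature maps $\varphi_1,\dots,\varphi_K:\mathcal X\to\mathbb R$, and $s:\mathbb N\to\mathbb N$ with $s(n)<n-1$. Conditionally on a distribution $D$ on $\mathcal X$, agent $i$ holds $X_i=(X_{i,1},\dots,X_{i,n_i})$, $n_i\ge1$, i.i.d. from $D$, independent across agents, and submits it. $\varphi_k(S)=\{\varphi_k(x):x\in S\}$; for a finite nonempty multiset $S\subset\mathbb R$, $F_S(t)=\frac1{|S|}\sum_{s\in S}\mathbf 1\{s\le t\}$. Mechanism: $X_{-i}=\bigcup_{j\ne i}X_j$ is split uniformly at random as $\{T_i\}\cup W_i\cup Z_i$ with $|W_i|=s(|X_{-i}|)$, and $L_i=\frac1K\sum_{k=1}^K\big(F_{\varphi_k(X_i\cup W_i)}(\varphi_k(T_i))-F_{\varphi_k(Z_i)}(\varphi_k(T_i))\big)^2$.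 $\mathbb E_D$ is expectation over data i.i.d. from $D$ and mechanism randomness; $\Pi$ is a prior over distributions on $\mathcal X$ (Bayesian) and $\mathcal F$ a class of distributions on $\mathcal X$ (frequentist). *)

theory Defs
  imports "HOL-Probability.Probability"
begin

definition ecdf :: "'i set \<Rightarrow> ('i \<Rightarrow> real) \<Rightarrow> real \<Rightarrow> real" where
  "ecdf S g x = (\<Sum>a\<in>S. if g a \<le> x then 1 else 0) / real (card S)"

text \<open>Data points are indexed by pairs (j, l): agent j < m, sample number l < n j.\<close>
definition data_index :: "nat \<Rightarrow> (nat \<Rightarrow> nat) \<Rightarrow> (nat \<times> nat) set" where
  "data_index m n = {(j, l). j < m \<and> l < n j}"

definition own_index :: "(nat \<Rightarrow> nat) \<Rightarrow> nat \<Rightarrow> (nat \<times> nat) set" where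
  "own_index n i = {(j, l). j = i \<and> l < n i}"

definition others_index :: "nat \<Rightarrow> (nat \<Rightarrow> nat) \<Rightarrow> nat \<Rightarrow> (nat \<times> nat) set" where
  "others_index m n i = {(j, l). j < m \<and> j \<noteq> i \<and> l < n j}"

text \<open>Possible splits of the index set O of X_{-i} into {T}, W (of size w) and Z = O - {T} - W.\<close>
definition splits :: "(nat \<times> nat) set \<Rightarrow> nat \<Rightarrow> ((nat \<times> nat) \<times> (nat \<times> nat) set) set" where
  "splits Ob w = {(t, W). t \<in> Ob \<and> W \<subseteq> Ob - {t} \<and> card W = w}"

definition loss :: "nat \<Rightarrow> (nat \<Rightarrow> 'a \<Rightarrow> real) \<Rightarrow> nat \<Rightarrow> (nat \<Rightarrow> nat) \<Rightarrow> nat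
    \<Rightarrow> ((nat \<times> nat) \<Rightarrow> 'a) \<Rightarrow> ((nat \<times> nat) \<times> (nat \<times> nat) set) \<Rightarrow> real" where
  "loss K \<phi> m n i \<omega> tw = (case tw of (t, W) \<Rightarrow>
     (1 / real K) * (\<Sum>k<K.
        (ecdf (own_index n i \<union> W) (\<lambda>a. \<phi> k (\<omega> a)) (\<phi> k (\<omega> t))
         - ecdf (others_index m n i - {t} - W) (\<lambda>a. \<phi> k (\<omega> a)) (\<phi> k (\<omega> t)))\<^sup>2))"

text \<open>E_D[L_i]: data of all agents i.i.d. from D, split chosen uniformly at random.\<close>
definition expected_loss :: "'a measure \<Rightarrow> nat \<Rightarrow> (nat \<Rightarrow> 'a \<Rightarrow> real) \<Rightarrow> nat
    \<Rightarrow> (nat \<Rightarrow> nat) \<Rightarrow> (nat \<Rightarrow> nat) \<Rightarrow> nat \<Rightarrow> real" where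
  "expected_loss D K \<phi> m n s i =
     (let Ob = others_index m n i; S = splits Ob (s (card Ob)) in
      \<integral>\<omega>. (\<Sum>tw\<in>S. loss K \<phi> m n i \<omega> tw) / real (card S) \<partial>(PiM (data_index m n) (\<lambda>_. D)))"

definition atomless_features :: "'a measure \<Rightarrow> nat \<Rightarrow> (nat \<Rightarrow> 'a \<Rightarrow> real) \<Rightarrow> bool" where
  "atomless_features D K \<phi> = (\<forall>k<K. \<forall>x. measure (distr D borel (\<phi> k)) {x} = 0)"

end

theory Submission
  imports Defs
begin


lemma pim3:
  fixes f :: "'a \<Rightarrow> 'a \<Rightarrow> 'a \<Rightarrow> ennreal"
  assumes D: "prob_space D" and I: "finite I" "j0 \<in> I" "j1 \<in> I" "j2 \<in> I"
    and d: "j0\<noteq>j1" "j0\<noteq>j2" "j1\<noteq>j2"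
    and f[measurable]: "(\<lambda>(x,y,z). f x y z) \<in> borel_measurable (D \<Otimes>\<^sub>M (D \<Otimes>\<^sub>M D))"
  shows "(\<integral>\<^sup>+\<omega>. f (\<omega> j0) (\<omega> j1) (\<omega> j2) \<partial>PiM I (\<lambda>_. D)) = (\<integral>\<^sup>+z. \<integral>\<^sup>+y. \<integral>\<^sup>+x. f x y z \<partial>D \<partial>D \<partial>D)"
proof -
  interpret P: product_prob_space "\<lambda>_. D" by (simp add: D product_prob_space.intro product_prob_space_axioms.intro product_sigma_finite.intro prob_space_imp_sigma_finite)
  have sfD: "sigma_finite_measure D" using D by (simp add: prob_space_imp_sigma_finite)
  have fm: "\<And>N a b c. a \<in> N \<rightarrow>\<^sub>M D \<Longrightarrow> b \<in> N \<rightarrow>\<^sub>M D \<Longrightarrow> c \<in> N \<rightarrow>\<^sub>M D \<Longrightarrow> (\<lambda>x. f (a x) (b x) (c x)) \<in> borel_measurable N"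
  proof -
    fix N a b c assume "a \<in> N \<rightarrow>\<^sub>M D" "b \<in> N \<rightarrow>\<^sub>M D" "c \<in> N \<rightarrow>\<^sub>M D"
    then have "(\<lambda>x. (a x, b x, c x)) \<in> N \<rightarrow>\<^sub>M (D \<Otimes>\<^sub>M (D \<Otimes>\<^sub>M D))" by (auto intro!: measurable_Pair)
    from measurable_comp[OF this f] show "(\<lambda>x. f (a x) (b x) (c x)) \<in> borel_measurable N" by (simp add: comp_def)
  qed
  define J where "J = {j0,j1,j2}"
  have JI: "J \<subseteq> I" using I by (auto simp: J_def)
  define g where "g = (\<lambda>\<omega>. f (\<omega> j0) (\<omega> j1) (\<omega> j2))"
  have gm[measurable]: "g \<in> borel_measurable (PiM J (\<lambda>_. D))"
  proof -
    have "(\<lambda>\<omega>. (\<omega> j0, \<omega> j1, \<omega> j2)) \<in> measurable (PiM J (\<lambda>_. D)) (D \<Otimes>\<^sub>M (D \<Otimes>\<^sub>M D))"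
      by (auto simp: J_def intro!: measurable_Pair measurable_component_singleton)
    from measurable_comp[OF this f] show ?thesis by (simp add: g_def comp_def)
  qed
  have "(\<integral>\<^sup>+\<omega>. f (\<omega> j0) (\<omega> j1) (\<omega> j2) \<partial>PiM I (\<lambda>_. D)) = (\<integral>\<^sup>+\<omega>. g (restrict \<omega> J) \<partial>PiM I (\<lambda>_. D))"
    by (simp add: g_def J_def)
  also have "\<dots> = (\<integral>\<^sup>+\<omega>. g \<omega> \<partial>distr (PiM I (\<lambda>_. D)) (PiM J (\<lambda>_. D)) (\<lambda>\<omega>. restrict \<omega> J))"
    apply (rule nn_integral_distr[symmetric])
    apply (rule measurable_restrict_subset[OF JI])
    using gm by simp
  also have "\<dots> = (\<integral>\<^sup>+\<omega>. g \<omega> \<partial>PiM J (\<lambda>_. D))"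
    using P.distr_restrict[OF JI I(1)] by simp
  also have "\<dots> = (\<integral>\<^sup>+x. (\<integral>\<^sup>+ y. g (x(j0 := y)) \<partial>D) \<partial>PiM {j1,j2} (\<lambda>_. D))"
    unfolding J_def using d by (subst P.product_nn_integral_insert) (auto simp: J_def[symmetric])
  also have "\<dots> = (\<integral>\<^sup>+x. (\<integral>\<^sup>+ y. f y (x j1) (x j2) \<partial>D) \<partial>PiM {j1,j2} (\<lambda>_. D))"
    using d by (simp add: g_def)
  also have "\<dots> = (\<integral>\<^sup>+x. (\<integral>\<^sup>+ y1. (\<integral>\<^sup>+ y. f y y1 (x j2) \<partial>D) \<partial>D) \<partial>PiM {j2} (\<lambda>_. D))"
  proof (subst P.product_nn_integral_insert)
    show "(\<lambda>x. \<integral>\<^sup>+ y. f y (x j1) (x j2) \<partial>D) \<in> borel_measurable (PiM (insert j1 {j2}) (\<lambda>_. D))"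
      apply (rule sigma_finite_measure.borel_measurable_nn_integral[OF sfD])
      apply (simp add: split_beta')
      apply (rule fm) apply measurable done
  qed (use d in auto)
  also have "\<dots> = (\<integral>\<^sup>+z. \<integral>\<^sup>+y. \<integral>\<^sup>+x. f x y z \<partial>D \<partial>D \<partial>D)"
    apply (rule P.product_nn_integral_singleton)
    apply (rule sigma_finite_measure.borel_measurable_nn_integral[OF sfD])
    apply (simp add: split_beta')
    apply (rule sigma_finite_measure.borel_measurable_nn_integral[OF sfD])
    apply (simp add: split_beta')
    apply (rule fm) apply measurable done
  finally show ?thesis .
qed

lemma pim2:
  fixes f :: "'a \<Rightarrow> 'a \<Rightarrow> ennreal"
  assumes D: "prob_space D" and I: "finite I" "j0 \<in> I" "j1 \<in> I"
    and d: "j0\<noteq>j1"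
    and f[measurable]: "(\<lambda>(x,y). f x y) \<in> borel_measurable (D \<Otimes>\<^sub>M D)"
  shows "(\<integral>\<^sup>+\<omega>. f (\<omega> j0) (\<omega> j1) \<partial>PiM I (\<lambda>_. D)) = (\<integral>\<^sup>+y. \<integral>\<^sup>+x. f x y \<partial>D \<partial>D)"
proof -
  interpret P: product_prob_space "\<lambda>_. D" by (simp add: D product_prob_space.intro product_prob_space_axioms.intro product_sigma_finite.intro prob_space_imp_sigma_finite)
  have sfD: "sigma_finite_measure D" using D by (simp add: prob_space_imp_sigma_finite)
  have fm: "\<And>N a b. a \<in> N \<rightarrow>\<^sub>M D \<Longrightarrow> b \<in> N \<rightarrow>\<^sub>M D \<Longrightarrow> (\<lambda>x. f (a x) (b x)) \<in> borel_measurable N"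
  proof -
    fix N a b assume "a \<in> N \<rightarrow>\<^sub>M D" "b \<in> N \<rightarrow>\<^sub>M D"
    then have "(\<lambda>x. (a x, b x)) \<in> N \<rightarrow>\<^sub>M (D \<Otimes>\<^sub>M D)" by (auto intro!: measurable_Pair)
    from measurable_comp[OF this f] show "(\<lambda>x. f (a x) (b x)) \<in> borel_measurable N" by (simp add: comp_def)
  qed
  define J where "J = {j0,j1}"
  have JI: "J \<subseteq> I" using I by (auto simp: J_def)
  define g where "g = (\<lambda>\<omega>. f (\<omega> j0) (\<omega> j1))"
  have gm[measurable]: "g \<in> borel_measurable (PiM J (\<lambda>_. D))"
    unfolding g_def by (rule fm) (auto simp: J_def intro!: measurable_component_singleton)
  have "(\<integral>\<^sup>+\<omega>. f (\<omega> j0) (\<omega> j1) \<partial>PiM I (\<lambda>_. D)) = (\<integral>\<^sup>+\<omega>. g (restrict \<omega> J) \<partial>PiM I (\<lambda>_. D))"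
    by (simp add: g_def J_def)
  also have "\<dots> = (\<integral>\<^sup>+\<omega>. g \<omega> \<partial>distr (PiM I (\<lambda>_. D)) (PiM J (\<lambda>_. D)) (\<lambda>\<omega>. restrict \<omega> J))"
    apply (rule nn_integral_distr[symmetric])
    apply (rule measurable_restrict_subset[OF JI])
    using gm by simp
  also have "\<dots> = (\<integral>\<^sup>+\<omega>. g \<omega> \<partial>PiM J (\<lambda>_. D))"
    using P.distr_restrict[OF JI I(1)] by simp
  also have "\<dots> = (\<integral>\<^sup>+x. (\<integral>\<^sup>+ y. g (x(j0 := y)) \<partial>D) \<partial>PiM {j1} (\<lambda>_. D))"
    unfolding J_def using d by (subst P.product_nn_integral_insert) (auto simp: J_def[symmetric])
  also have "\<dots> = (\<integral>\<^sup>+x. (\<integral>\<^sup>+ y. f y (x j1) \<partial>D) \<partial>PiM {j1} (\<lambda>_. D))"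
    using d by (simp add: g_def)
  also have "\<dots> = (\<integral>\<^sup>+y. \<integral>\<^sup>+x. f x y \<partial>D \<partial>D)"
    apply (rule P.product_nn_integral_singleton)
    apply (rule sigma_finite_measure.borel_measurable_nn_integral[OF sfD])
    apply (simp add: split_beta')
    done
  finally show ?thesis .
qed

definition eI :: "('a \<Rightarrow> real) \<Rightarrow> 'a \<Rightarrow> 'a \<Rightarrow> ennreal" where
  "eI \<psi> y z = (if \<psi> y \<le> \<psi> z then 1 else 0)"
definition GG :: "'a measure \<Rightarrow> ('a \<Rightarrow> real) \<Rightarrow> 'a \<Rightarrow> ennreal" where
  "GG D \<psi> z = (\<integral>\<^sup>+y. eI \<psi> y z \<partial>D)"
definition Q1 :: "'a measure \<Rightarrow> ('a \<Rightarrow> real) \<Rightarrow> ennreal" where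
  "Q1 D \<psi> = (\<integral>\<^sup>+z. GG D \<psi> z \<partial>D)"
definition Q2 :: "'a measure \<Rightarrow> ('a \<Rightarrow> real) \<Rightarrow> ennreal" where
  "Q2 D \<psi> = (\<integral>\<^sup>+z. GG D \<psi> z * GG D \<psi> z \<partial>D)"

lemma eI_meas[measurable]:
  assumes [measurable]: "\<psi> \<in> borel_measurable D"
  shows "(\<lambda>(x,y). eI \<psi> x y) \<in> borel_measurable (D \<Otimes>\<^sub>M D)"
  unfolding eI_def by measurable

lemma E1:
  assumes D: "prob_space D" and psi[measurable]: "\<psi> \<in> borel_measurable D"
    and I: "finite I" "x \<in> I" "t \<in> I" "x \<noteq> t"
  shows "integrable (PiM I (\<lambda>_. D)) (\<lambda>\<omega>. if \<psi> (\<omega> x) \<le> \<psi> (\<omega> t) then 1 else 0 :: real)"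
    and "(\<integral>\<omega>. (if \<psi> (\<omega> x) \<le> \<psi> (\<omega> t) then 1 else 0 :: real) \<partial>PiM I (\<lambda>_. D)) = enn2real (Q1 D \<psi>)"
proof -
  interpret P: product_prob_space "\<lambda>_. D" by (simp add: D product_prob_space.intro product_prob_space_axioms.intro product_sigma_finite.intro prob_space_imp_sigma_finite)
  have PIp: "prob_space (PiM I (\<lambda>_. D))" by (rule prob_space_PiM) (use D in auto)
  have m: "(\<lambda>\<omega>. if \<psi> (\<omega> x) \<le> \<psi> (\<omega> t) then 1 else 0 :: real) \<in> borel_measurable (PiM I (\<lambda>_. D))"
    using I by measurable
  show "integrable (PiM I (\<lambda>_. D)) (\<lambda>\<omega>. if \<psi> (\<omega> x) \<le> \<psi> (\<omega> t) then 1 else 0 :: real)"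
    by (rule finite_measure.integrable_const_bound[OF prob_space.axioms(1)[OF PIp], where B=1]) (use m in auto)
  have "(\<integral>\<omega>. (if \<psi> (\<omega> x) \<le> \<psi> (\<omega> t) then 1 else 0 :: real) \<partial>PiM I (\<lambda>_. D))
      = enn2real (\<integral>\<^sup>+\<omega>. ennreal (if \<psi> (\<omega> x) \<le> \<psi> (\<omega> t) then 1 else 0 :: real) \<partial>PiM I (\<lambda>_. D))"
    by (rule integral_eq_nn_integral) (use m in auto)
  also have "(\<integral>\<^sup>+\<omega>. ennreal (if \<psi> (\<omega> x) \<le> \<psi> (\<omega> t) then 1 else 0 :: real) \<partial>PiM I (\<lambda>_. D))
     = (\<integral>\<^sup>+\<omega>. eI \<psi> (\<omega> x) (\<omega> t) \<partial>PiM I (\<lambda>_. D))"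
    by (intro nn_integral_cong) (simp add: eI_def)
  also have "\<dots> = Q1 D \<psi>"
    unfolding Q1_def GG_def by (rule pim2[OF D I]) (rule eI_meas[OF psi])
  finally show "(\<integral>\<omega>. (if \<psi> (\<omega> x) \<le> \<psi> (\<omega> t) then 1 else 0 :: real) \<partial>PiM I (\<lambda>_. D)) = enn2real (Q1 D \<psi>)" .
qed

lemma eI_meas1[measurable]:
  assumes [measurable]: "\<psi> \<in> borel_measurable D" "z \<in> space D"
  shows "(\<lambda>x. eI \<psi> x z) \<in> borel_measurable D"
  unfolding eI_def by measurable

lemma E2:
  assumes D: "prob_space D" and psi[measurable]: "\<psi> \<in> borel_measurable D"
    and I: "finite I" "x \<in> I" "y \<in> I" "t \<in> I" "x \<noteq> y" "x \<noteq> t" "y \<noteq> t"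
  shows "integrable (PiM I (\<lambda>_. D)) (\<lambda>\<omega>. (if \<psi> (\<omega> x) \<le> \<psi> (\<omega> t) then 1 else 0 :: real) * (if \<psi> (\<omega> y) \<le> \<psi> (\<omega> t) then 1 else 0 :: real))"
    and "(\<integral>\<omega>. (if \<psi> (\<omega> x) \<le> \<psi> (\<omega> t) then 1 else 0 :: real) * (if \<psi> (\<omega> y) \<le> \<psi> (\<omega> t) then 1 else 0 :: real) \<partial>PiM I (\<lambda>_. D)) = enn2real (Q2 D \<psi>)"
proof -
  have PIp: "prob_space (PiM I (\<lambda>_. D))" by (rule prob_space_PiM) (use D in auto)
  have m: "(\<lambda>\<omega>. (if \<psi> (\<omega> x) \<le> \<psi> (\<omega> t) then 1 else 0 :: real) * (if \<psi> (\<omega> y) \<le> \<psi> (\<omega> t) then 1 else 0 :: real)) \<in> borel_measurable (PiM I (\<lambda>_. D))"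
    using I by measurable
  show "integrable (PiM I (\<lambda>_. D)) (\<lambda>\<omega>. (if \<psi> (\<omega> x) \<le> \<psi> (\<omega> t) then 1 else 0 :: real) * (if \<psi> (\<omega> y) \<le> \<psi> (\<omega> t) then 1 else 0 :: real))"
    by (rule finite_measure.integrable_const_bound[OF prob_space.axioms(1)[OF PIp], where B=1]) (use m in auto)
  have "(\<integral>\<omega>. (if \<psi> (\<omega> x) \<le> \<psi> (\<omega> t) then 1 else 0 :: real) * (if \<psi> (\<omega> y) \<le> \<psi> (\<omega> t) then 1 else 0 :: real) \<partial>PiM I (\<lambda>_. D))
      = enn2real (\<integral>\<^sup>+\<omega>. ennreal ((if \<psi> (\<omega> x) \<le> \<psi> (\<omega> t) then 1 else 0 :: real) * (if \<psi> (\<omega> y) \<le> \<psi> (\<omega> t) then 1 else 0 :: real)) \<partial>PiM I (\<lambda>_. D))"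
    by (rule integral_eq_nn_integral) (use m in auto)
  also have "(\<integral>\<^sup>+\<omega>. ennreal ((if \<psi> (\<omega> x) \<le> \<psi> (\<omega> t) then 1 else 0 :: real) * (if \<psi> (\<omega> y) \<le> \<psi> (\<omega> t) then 1 else 0 :: real)) \<partial>PiM I (\<lambda>_. D))
     = (\<integral>\<^sup>+\<omega>. eI \<psi> (\<omega> x) (\<omega> t) * eI \<psi> (\<omega> y) (\<omega> t) \<partial>PiM I (\<lambda>_. D))"
    by (intro nn_integral_cong) (simp add: eI_def)
  also have "\<dots> = (\<integral>\<^sup>+c. \<integral>\<^sup>+b. \<integral>\<^sup>+a. eI \<psi> a c * eI \<psi> b c \<partial>D \<partial>D \<partial>D)"
    by (rule pim3[OF D I]) (unfold eI_def, measurable)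
  also have "\<dots> = (\<integral>\<^sup>+c. \<integral>\<^sup>+b. GG D \<psi> c * eI \<psi> b c \<partial>D \<partial>D)"
    unfolding GG_def
    by (intro nn_integral_cong nn_integral_multc) (simp add: eI_meas1)
  also have "\<dots> = (\<integral>\<^sup>+c. GG D \<psi> c * GG D \<psi> c \<partial>D)"
    unfolding GG_def
    by (intro nn_integral_cong nn_integral_cmult) (simp add: eI_meas1)
  finally show "(\<integral>\<omega>. (if \<psi> (\<omega> x) \<le> \<psi> (\<omega> t) then 1 else 0 :: real) * (if \<psi> (\<omega> y) \<le> \<psi> (\<omega> t) then 1 else 0 :: real) \<partial>PiM I (\<lambda>_. D)) = enn2real (Q2 D \<psi>)"
    by (simp add: Q2_def)
qed

lemma comb:
  assumes D: "prob_space D" and psi[measurable]: "\<psi> \<in> borel_measurable D"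
    and I: "finite I" "t \<in> I" "A \<subseteq> I" "B \<subseteq> I" "t \<notin> A" "t \<notin> B" "A \<inter> B = {}"
    and AB: "card A > 0" "card B > 0"
  shows "integrable (PiM I (\<lambda>_. D)) (\<lambda>\<omega>. (ecdf A (\<lambda>a. \<psi> (\<omega> a)) (\<psi> (\<omega> t)) - ecdf B (\<lambda>a. \<psi> (\<omega> a)) (\<psi> (\<omega> t)))\<^sup>2)"
    and "(\<integral>\<omega>. (ecdf A (\<lambda>a. \<psi> (\<omega> a)) (\<psi> (\<omega> t)) - ecdf B (\<lambda>a. \<psi> (\<omega> a)) (\<psi> (\<omega> t)))\<^sup>2 \<partial>PiM I (\<lambda>_. D))
       = (enn2real (Q1 D \<psi>) - enn2real (Q2 D \<psi>)) * (1 / real (card A) + 1 / real (card B))"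
proof -
  define ind where "ind = (\<lambda>\<omega> x. if \<psi> (\<omega> x) \<le> \<psi> (\<omega> t) then 1 else 0 :: real)"
  define C where "C = A \<union> B"
  define cf where "cf = (\<lambda>x. if x \<in> A then 1 / real (card A) else - 1 / real (card B))"
  define q1 where "q1 = enn2real (Q1 D \<psi>)"
  define q2 where "q2 = enn2real (Q2 D \<psi>)"
  have fA: "finite A" "finite B" using I by (auto intro: finite_subset)
  have fC: "finite C" using fA by (simp add: C_def)
  have eq: "ecdf A (\<lambda>a. \<psi> (\<omega> a)) (\<psi> (\<omega> t)) - ecdf B (\<lambda>a. \<psi> (\<omega> a)) (\<psi> (\<omega> t)) = (\<Sum>x\<in>C. cf x * ind \<omega> x)" for \<omega>
  proof -
    have "(\<Sum>x\<in>C. cf x * ind \<omega> x) = (\<Sum>x\<in>A. cf x * ind \<omega> x) + (\<Sum>x\<in>B. cf x * ind \<omega> x)"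
      unfolding C_def by (rule sum.union_disjoint) (use fA I in auto)
    also have "(\<Sum>x\<in>A. cf x * ind \<omega> x) = (\<Sum>x\<in>A. ind \<omega> x) / real (card A)"
      by (simp add: cf_def sum_divide_distrib)
    also have "(\<Sum>x\<in>B. cf x * ind \<omega> x) = - (\<Sum>x\<in>B. ind \<omega> x) / real (card B)"
    proof -
      have "(\<Sum>x\<in>B. cf x * ind \<omega> x) = (\<Sum>x\<in>B. - ind \<omega> x / real (card B))"
        using I by (intro sum.cong) (auto simp: cf_def)
      then show ?thesis by (simp add: sum_divide_distrib sum_negf)
    qed
    finally show ?thesis by (simp add: ecdf_def ind_def)
  qed
  have sq: "(\<Sum>x\<in>C. cf x * ind \<omega> x)\<^sup>2 = (\<Sum>x\<in>C. \<Sum>y\<in>C. cf x * cf y * (ind \<omega> x * ind \<omega> y))" for \<omega>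
    by (simp add: power2_eq_square sum_product algebra_simps)
  have each: "integrable (PiM I (\<lambda>_. D)) (\<lambda>\<omega>. ind \<omega> x * ind \<omega> y) \<and>
      (\<integral>\<omega>. ind \<omega> x * ind \<omega> y \<partial>PiM I (\<lambda>_. D)) = (if x = y then q1 else q2)" if xy: "x \<in> C" "y \<in> C" for x y
  proof (cases "x = y")
    case True
    have xI: "x \<in> I" "x \<noteq> t" using xy I True by (auto simp: C_def)
    have "(\<lambda>\<omega>. ind \<omega> x * ind \<omega> y) = (\<lambda>\<omega>. if \<psi> (\<omega> x) \<le> \<psi> (\<omega> t) then 1 else 0 :: real)"
      using True by (auto simp: ind_def fun_eq_iff)
    then show ?thesis using E1[OF D psi I(1) xI(1) I(2) xI(2)] True by (simp add: q1_def)
  next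
    case False
    have xI: "x \<in> I" "y \<in> I" "x \<noteq> t" "y \<noteq> t" using xy I by (auto simp: C_def)
    show ?thesis using E2[OF D psi I(1) xI(1,2) I(2) False xI(3,4)] False by (simp add: q2_def ind_def)
  qed
  have int2: "integrable (PiM I (\<lambda>_. D)) (\<lambda>\<omega>. \<Sum>x\<in>C. \<Sum>y\<in>C. cf x * cf y * (ind \<omega> x * ind \<omega> y))"
    apply (rule Bochner_Integration.integrable_sum)+
    apply (rule Bochner_Integration.integrable_mult_right)
    using each by blast
  have "(\<integral>\<omega>. (\<Sum>x\<in>C. \<Sum>y\<in>C. cf x * cf y * (ind \<omega> x * ind \<omega> y)) \<partial>PiM I (\<lambda>_. D))
      = (\<Sum>x\<in>C. \<Sum>y\<in>C. cf x * cf y * (if x = y then q1 else q2))"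
  proof -
    have "(\<integral>\<omega>. (\<Sum>x\<in>C. \<Sum>y\<in>C. cf x * cf y * (ind \<omega> x * ind \<omega> y)) \<partial>PiM I (\<lambda>_. D))
      = (\<Sum>x\<in>C. \<integral>\<omega>. (\<Sum>y\<in>C. cf x * cf y * (ind \<omega> x * ind \<omega> y)) \<partial>PiM I (\<lambda>_. D))"
      apply (rule Bochner_Integration.integral_sum)
      apply (rule Bochner_Integration.integrable_sum)+
      apply (rule Bochner_Integration.integrable_mult_right)
      using each by blast
    also have "\<dots> = (\<Sum>x\<in>C. \<Sum>y\<in>C. \<integral>\<omega>. cf x * cf y * (ind \<omega> x * ind \<omega> y) \<partial>PiM I (\<lambda>_. D))"
      apply (intro sum.cong refl)
      apply (rule Bochner_Integration.integral_sum)
      apply (rule Bochner_Integration.integrable_mult_right)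
      using each by blast
    also have "\<dots> = (\<Sum>x\<in>C. \<Sum>y\<in>C. cf x * cf y * (if x = y then q1 else q2))"
      using each by (intro sum.cong refl) (simp)
    finally show ?thesis .
  qed
  also have "\<dots> = q2 * (\<Sum>x\<in>C. cf x) * (\<Sum>y\<in>C. cf y) + (q1 - q2) * (\<Sum>x\<in>C. cf x * cf x)"
  proof -
    have "(\<Sum>x\<in>C. \<Sum>y\<in>C. cf x * cf y * (if x = y then q1 else q2))
        = (\<Sum>x\<in>C. \<Sum>y\<in>C. q2 * (cf x * cf y) + (if x = y then (q1 - q2) * (cf x * cf y) else 0))"
      by (intro sum.cong refl) (auto simp: algebra_simps)
    also have "\<dots> = (\<Sum>x\<in>C. q2 * cf x * (\<Sum>y\<in>C. cf y) + (q1 - q2) * (cf x * cf x))"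
    proof (intro sum.cong refl)
      fix x assume "x \<in> C"
      then show "(\<Sum>y\<in>C. q2 * (cf x * cf y) + (if x = y then (q1 - q2) * (cf x * cf y) else 0)) = q2 * cf x * (\<Sum>y\<in>C. cf y) + (q1 - q2) * (cf x * cf x)"
        using fC by (simp add: sum.distrib sum_distrib_left mult.assoc sum.delta sum.delta')
    qed
    also have "\<dots> = q2 * (\<Sum>x\<in>C. cf x) * (\<Sum>y\<in>C. cf y) + (q1 - q2) * (\<Sum>x\<in>C. cf x * cf x)"
      by (simp only: sum.distrib sum_distrib_left[symmetric] sum_distrib_right[symmetric])
    finally show ?thesis .
  qed
  also have "(\<Sum>x\<in>C. cf x) = 0"
  proof -
    have "(\<Sum>x\<in>C. cf x) = (\<Sum>x\<in>A. cf x) + (\<Sum>x\<in>B. cf x)"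
      unfolding C_def by (rule sum.union_disjoint) (use fA I in auto)
    also have "(\<Sum>x\<in>B. cf x) = (\<Sum>x\<in>B. - 1 / real (card B))"
      using I by (intro sum.cong) (auto simp: cf_def)
    finally show ?thesis using AB by (simp add: cf_def)
  qed
  also have "(\<Sum>x\<in>C. cf x * cf x) = 1 / real (card A) + 1 / real (card B)"
  proof -
    have "(\<Sum>x\<in>C. cf x * cf x) = (\<Sum>x\<in>A. cf x * cf x) + (\<Sum>x\<in>B. cf x * cf x)"
      unfolding C_def by (rule sum.union_disjoint) (use fA I in auto)
    also have "(\<Sum>x\<in>B. cf x * cf x) = (\<Sum>x\<in>B. 1 / real (card B) * (1 / real (card B)))"
      using I by (intro sum.cong) (auto simp: cf_def)
    finally show ?thesis using AB by (simp add: cf_def power2_eq_square)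
  qed
  finally have main: "(\<integral>\<omega>. (\<Sum>x\<in>C. \<Sum>y\<in>C. cf x * cf y * (ind \<omega> x * ind \<omega> y)) \<partial>PiM I (\<lambda>_. D))
     = (q1 - q2) * (1 / real (card A) + 1 / real (card B))" by simp
  have fe: "(\<lambda>\<omega>. (ecdf A (\<lambda>a. \<psi> (\<omega> a)) (\<psi> (\<omega> t)) - ecdf B (\<lambda>a. \<psi> (\<omega> a)) (\<psi> (\<omega> t)))\<^sup>2)
      = (\<lambda>\<omega>. \<Sum>x\<in>C. \<Sum>y\<in>C. cf x * cf y * (ind \<omega> x * ind \<omega> y))"
    using eq sq by auto
  show "integrable (PiM I (\<lambda>_. D)) (\<lambda>\<omega>. (ecdf A (\<lambda>a. \<psi> (\<omega> a)) (\<psi> (\<omega> t)) - ecdf B (\<lambda>a. \<psi> (\<omega> a)) (\<psi> (\<omega> t)))\<^sup>2)"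
    unfolding fe by (rule int2)
  show "(\<integral>\<omega>. (ecdf A (\<lambda>a. \<psi> (\<omega> a)) (\<psi> (\<omega> t)) - ecdf B (\<lambda>a. \<psi> (\<omega> a)) (\<psi> (\<omega> t)))\<^sup>2 \<partial>PiM I (\<lambda>_. D))
       = (enn2real (Q1 D \<psi>) - enn2real (Q2 D \<psi>)) * (1 / real (card A) + 1 / real (card B))"
    unfolding fe main q1_def q2_def ..
qed

definition T3 :: "'a measure \<Rightarrow> ('a \<Rightarrow> 'a \<Rightarrow> 'a \<Rightarrow> ennreal) \<Rightarrow> ennreal" where
  "T3 D h = (\<integral>\<^sup>+z. \<integral>\<^sup>+y. \<integral>\<^sup>+w. h z y w \<partial>D \<partial>D \<partial>D)"

lemma m3_comp:
  assumes h: "(\<lambda>(z,y,w). h z y w) \<in> borel_measurable (D \<Otimes>\<^sub>M (D \<Otimes>\<^sub>M D))"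
    and "a \<in> N \<rightarrow>\<^sub>M D" "b \<in> N \<rightarrow>\<^sub>M D" "c \<in> N \<rightarrow>\<^sub>M D"
  shows "(\<lambda>x. h (a x) (b x) (c x)) \<in> borel_measurable N"
proof -
  have "(\<lambda>x. (a x, b x, c x)) \<in> N \<rightarrow>\<^sub>M (D \<Otimes>\<^sub>M (D \<Otimes>\<^sub>M D))" using assms(2-4) by (auto intro!: measurable_Pair)
  from measurable_comp[OF this h] show ?thesis by (simp add: comp_def)
qed

lemma m3_int1:
  assumes D: "prob_space D" and h: "(\<lambda>(z,y,w). h z y w) \<in> borel_measurable (D \<Otimes>\<^sub>M (D \<Otimes>\<^sub>M D))"
    and a: "a \<in> N \<rightarrow>\<^sub>M D" and b: "b \<in> N \<rightarrow>\<^sub>M D"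
  shows "(\<lambda>x. \<integral>\<^sup>+w. h (a x) (b x) w \<partial>D) \<in> borel_measurable N"
proof -
  have sfD: "sigma_finite_measure D" using D by (simp add: prob_space_imp_sigma_finite)
  show ?thesis
    apply (rule sigma_finite_measure.borel_measurable_nn_integral[OF sfD])
    apply (simp add: split_beta')
    apply (rule m3_comp[OF h])
    using a b by measurable
qed

lemma m3_int2:
  assumes D: "prob_space D" and h: "(\<lambda>(z,y,w). h z y w) \<in> borel_measurable (D \<Otimes>\<^sub>M (D \<Otimes>\<^sub>M D))"
    and a: "a \<in> N \<rightarrow>\<^sub>M D"
  shows "(\<lambda>x. \<integral>\<^sup>+y. \<integral>\<^sup>+w. h (a x) y w \<partial>D \<partial>D) \<in> borel_measurable N"
proof -
  have sfD: "sigma_finite_measure D" using D by (simp add: prob_space_imp_sigma_finite)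
  show ?thesis
    apply (rule sigma_finite_measure.borel_measurable_nn_integral[OF sfD])
    apply (simp add: split_beta')
    apply (rule m3_int1[OF D h, where a="\<lambda>x. a (fst x)" and b=snd])
    using a by measurable
qed

lemma T3_add:
  assumes D: "prob_space D"
    and h: "(\<lambda>(z,y,w). h z y w) \<in> borel_measurable (D \<Otimes>\<^sub>M (D \<Otimes>\<^sub>M D))"
    and g: "(\<lambda>(z,y,w). g z y w) \<in> borel_measurable (D \<Otimes>\<^sub>M (D \<Otimes>\<^sub>M D))"
  shows "T3 D (\<lambda>z y w. h z y w + g z y w) = T3 D h + T3 D g"
proof -
  have "T3 D (\<lambda>z y w. h z y w + g z y w) = (\<integral>\<^sup>+z. (\<integral>\<^sup>+y. \<integral>\<^sup>+w. h z y w \<partial>D \<partial>D) + (\<integral>\<^sup>+y. \<integral>\<^sup>+w. g z y w \<partial>D \<partial>D) \<partial>D)"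
    unfolding T3_def
  proof (intro nn_integral_cong)
    fix z assume z: "z \<in> space D"
    have "(\<integral>\<^sup>+y. \<integral>\<^sup>+w. h z y w + g z y w \<partial>D \<partial>D) = (\<integral>\<^sup>+y. (\<integral>\<^sup>+w. h z y w \<partial>D) + (\<integral>\<^sup>+w. g z y w \<partial>D) \<partial>D)"
    proof (intro nn_integral_cong nn_integral_add)
      fix y assume y: "y \<in> space D"
      show "(\<lambda>w. h z y w) \<in> borel_measurable D" by (rule m3_comp[OF h]) (use z y in auto)
      show "(\<lambda>w. g z y w) \<in> borel_measurable D" by (rule m3_comp[OF g]) (use z y in auto)
    qed
    also have "\<dots> = (\<integral>\<^sup>+y. \<integral>\<^sup>+w. h z y w \<partial>D \<partial>D) + (\<integral>\<^sup>+y. \<integral>\<^sup>+w. g z y w \<partial>D \<partial>D)"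
      by (intro nn_integral_add m3_int1[OF D h] m3_int1[OF D g]) (use z in auto)
    finally show "(\<integral>\<^sup>+y. \<integral>\<^sup>+w. h z y w + g z y w \<partial>D \<partial>D) = (\<integral>\<^sup>+y. \<integral>\<^sup>+w. h z y w \<partial>D \<partial>D) + (\<integral>\<^sup>+y. \<integral>\<^sup>+w. g z y w \<partial>D \<partial>D)" .
  qed
  also have "\<dots> = T3 D h + T3 D g"
    unfolding T3_def by (intro nn_integral_add m3_int2[OF D h] m3_int2[OF D g]) auto
  finally show ?thesis .
qed

lemma T3_mono:
  assumes "\<And>z y w. h z y w \<le> g z y w"
  shows "T3 D h \<le> T3 D g"
  unfolding T3_def by (intro nn_integral_mono) (rule assms)

lemma T3_swap12:
  assumes D: "prob_space D"
    and h: "(\<lambda>(z,y,w). h z y w) \<in> borel_measurable (D \<Otimes>\<^sub>M (D \<Otimes>\<^sub>M D))"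
  shows "T3 D h = T3 D (\<lambda>z y w. h y z w)"
proof -
  interpret pair_sigma_finite D D
    using D by (simp add: pair_sigma_finite.intro prob_space_imp_sigma_finite)
  have "(\<integral>\<^sup>+y. \<integral>\<^sup>+x. (\<integral>\<^sup>+w. h y x w \<partial>D) \<partial>D \<partial>D) = (\<integral>\<^sup>+x. \<integral>\<^sup>+y. (\<integral>\<^sup>+w. h y x w \<partial>D) \<partial>D \<partial>D)"
    apply (rule Fubini')
    apply (simp add: split_beta')
    apply (rule m3_int1[OF D h]) by measurable
  then show ?thesis unfolding T3_def by simp
qed

lemma T3_swap23:
  assumes D: "prob_space D"
    and h: "(\<lambda>(z,y,w). h z y w) \<in> borel_measurable (D \<Otimes>\<^sub>M (D \<Otimes>\<^sub>M D))"
  shows "T3 D h = T3 D (\<lambda>z y w. h z w y)"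
proof -
  interpret pair_sigma_finite D D
    using D by (simp add: pair_sigma_finite.intro prob_space_imp_sigma_finite)
  show ?thesis unfolding T3_def
  proof (rule nn_integral_cong)
    fix z assume z: "z \<in> space D"
    show "(\<integral>\<^sup>+y. \<integral>\<^sup>+w. h z y w \<partial>D \<partial>D) = (\<integral>\<^sup>+y. \<integral>\<^sup>+w. h z w y \<partial>D \<partial>D)"
      apply (rule Fubini'[where f="\<lambda>x y. h z y x"])
      using z by (auto simp: split_beta' intro!: m3_comp[OF h])
  qed
qed

lemma GG_meas[measurable]:
  assumes D: "prob_space D" and psi[measurable]: "\<psi> \<in> borel_measurable D"
  shows "GG D \<psi> \<in> borel_measurable D"
proof -
  have sfD: "sigma_finite_measure D" using D by (simp add: prob_space_imp_sigma_finite)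
  show ?thesis unfolding GG_def
    apply (rule sigma_finite_measure.borel_measurable_nn_integral[OF sfD])
    unfolding eI_def by measurable
qed

lemma GG_le1:
  assumes D: "prob_space D"
  shows "GG D \<psi> z \<le> 1"
proof -
  have "GG D \<psi> z \<le> (\<integral>\<^sup>+y. 1 \<partial>D)"
    unfolding GG_def by (intro nn_integral_mono) (simp add: eI_def)
  also have "\<dots> = 1" using D by (simp add: prob_space.emeasure_space_1)
  finally show ?thesis .
qed




lemma GGfin:
  assumes D: "prob_space D"
  shows "GG D \<psi> z < \<top>"
proof -
  have "GG D \<psi> z \<le> 1" by (rule GG_le1[OF D])
  also have "(1::ennreal) < \<top>" by simp
  finally show ?thesis .
qed

lemma Qbounds:
  assumes D: "prob_space D" and psi[measurable]: "\<psi> \<in> borel_measurable D"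
  shows "0 \<le> enn2real (Q1 D \<psi>) - enn2real (Q2 D \<psi>)"
    and "enn2real (Q1 D \<psi>) - enn2real (Q2 D \<psi>) \<le> 1/4"
proof -
  interpret prob_space D by (rule D)
  define g where "g = (\<lambda>z. enn2real (GG D \<psi> z))"
  have GGg: "GG D \<psi> z = ennreal (g z)" for z
    unfolding g_def using GGfin[OF D] by (rule ennreal_enn2real[symmetric])
  have g01: "0 \<le> g z" "g z \<le> 1" for z
  proof -
    show "0 \<le> g z" unfolding g_def by (rule enn2real_nonneg)
    show "g z \<le> 1" unfolding g_def by (rule enn2real_leI) (use GG_le1[OF D, of \<psi> z] in auto)
  qed
  have gm[measurable]: "g \<in> borel_measurable D" unfolding g_def using GG_meas[OF D psi] by (rule borel_measurable_enn2real)
  have ig: "integrable D g" by (rule integrable_const_bound[where B=1]) (use g01 in auto)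
  have igg: "integrable D (\<lambda>z. g z * g z)"
    by (rule integrable_const_bound[where B=1]) (use g01 in \<open>auto intro!: mult_le_one\<close>)
  have q1: "enn2real (Q1 D \<psi>) = (\<integral>z. g z \<partial>D)"
  proof -
    have "Q1 D \<psi> = (\<integral>\<^sup>+z. ennreal (g z) \<partial>D)" unfolding Q1_def GGg ..
    also have "\<dots> = ennreal (\<integral>z. g z \<partial>D)" by (rule nn_integral_eq_integral) (use ig g01 in auto)
    finally show ?thesis by (simp add: integral_nonneg_AE g01)
  qed
  have q2: "enn2real (Q2 D \<psi>) = (\<integral>z. g z * g z \<partial>D)"
  proof -
    have "Q2 D \<psi> = (\<integral>\<^sup>+z. ennreal (g z * g z) \<partial>D)" unfolding Q2_def GGg
      by (intro nn_integral_cong) (simp add: ennreal_mult g01)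
    also have "\<dots> = ennreal (\<integral>z. g z * g z \<partial>D)" by (rule nn_integral_eq_integral) (use igg g01 in auto)
    finally show ?thesis by (simp add: integral_nonneg_AE g01)
  qed
  have diff: "enn2real (Q1 D \<psi>) - enn2real (Q2 D \<psi>) = (\<integral>z. g z - g z * g z \<partial>D)"
    unfolding q1 q2 by (rule Bochner_Integration.integral_diff[symmetric, OF ig igg])
  have pw: "0 \<le> g z - g z * g z" "g z - g z * g z \<le> 1/4" for z
  proof -
    have "g z * g z \<le> g z * 1" using g01[of z] by (intro mult_left_mono) auto
    then show "0 \<le> g z - g z * g z" by simp
    have "0 \<le> (g z - 1/2)^2" by simp
    then show "g z - g z * g z \<le> 1/4" by (simp add: power2_eq_square algebra_simps)
  qed
  show "0 \<le> enn2real (Q1 D \<psi>) - enn2real (Q2 D \<psi>)"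
    unfolding diff by (rule integral_nonneg_AE) (use pw in auto)
  have "(\<integral>z. g z - g z * g z \<partial>D) \<le> (\<integral>z. 1/4 \<partial>D)"
    by (rule integral_mono) (use ig igg pw in auto)
  also have "\<dots> = 1/4" by (simp add: prob_space)
  finally show "enn2real (Q1 D \<psi>) - enn2real (Q2 D \<psi>) \<le> 1/4" unfolding diff .
qed




definition eE :: "('a \<Rightarrow> real) \<Rightarrow> 'a \<Rightarrow> 'a \<Rightarrow> ennreal" where
  "eE \<psi> y z = (if \<psi> y = \<psi> z then 1 else 0)"

lemma tie0:
  assumes D: "prob_space D" and psi[measurable]: "\<psi> \<in> borel_measurable D"
    and at: "\<forall>v. measure (distr D borel \<psi>) {v} = 0"
  shows "(\<integral>\<^sup>+y. eE \<psi> y z \<partial>D) = 0"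
proof -
  have "(\<integral>\<^sup>+y. eE \<psi> y z \<partial>D) = (\<integral>\<^sup>+y. indicator {y\<in>space D. \<psi> y = \<psi> z} y \<partial>D)"
    by (intro nn_integral_cong) (simp add: eE_def indicator_def)
  also have "\<dots> = emeasure D {y\<in>space D. \<psi> y = \<psi> z}"
    by (rule nn_integral_indicator) measurable
  also have "\<dots> = emeasure (distr D borel \<psi>) {\<psi> z}"
    by (subst emeasure_distr) (auto intro!: arg_cong[where f="emeasure D"])
  also have "\<dots> = ennreal (measure (distr D borel \<psi>) {\<psi> z})"
    using prob_space.prob_space_distr[OF D psi] by (simp add: finite_measure.emeasure_eq_measure[OF prob_space.axioms(1)])
  also have "\<dots> = 0" using at by simp
  finally show ?thesis .
qed

lemma eI_meas2[measurable]:
  assumes [measurable]: "\<psi> \<in> borel_measurable D" "z \<in> space D"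
  shows "(\<lambda>x. eI \<psi> z x) \<in> borel_measurable D"
  unfolding eI_def by measurable

lemma Q1_half:
  assumes D: "prob_space D" and psi[measurable]: "\<psi> \<in> borel_measurable D"
    and at: "\<forall>v. measure (distr D borel \<psi>) {v} = 0"
  shows "enn2real (Q1 D \<psi>) = 1/2"
proof -
  interpret pair_sigma_finite D D
    using D by (simp add: pair_sigma_finite.intro prob_space_imp_sigma_finite)
  have sfD: "sigma_finite_measure D" using D by (simp add: prob_space_imp_sigma_finite)
  have B: "(\<integral>\<^sup>+z. \<integral>\<^sup>+y. eI \<psi> z y \<partial>D \<partial>D) = Q1 D \<psi>"
    unfolding Q1_def GG_def
    by (rule Fubini'[where f="\<lambda>x y. eI \<psi> x y", symmetric]) (rule eI_meas[OF psi])
  have m2: "(\<lambda>z. \<integral>\<^sup>+y. eI \<psi> z y \<partial>D) \<in> borel_measurable D"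
    by (rule sigma_finite_measure.borel_measurable_nn_integral[OF sfD]) (rule eI_meas[OF psi])
  have "Q1 D \<psi> + Q1 D \<psi> = Q1 D \<psi> + (\<integral>\<^sup>+z. \<integral>\<^sup>+y. eI \<psi> z y \<partial>D \<partial>D)"
    using B by simp
  also have "\<dots> = (\<integral>\<^sup>+z. GG D \<psi> z + (\<integral>\<^sup>+y. eI \<psi> z y \<partial>D) \<partial>D)"
    unfolding Q1_def
    by (rule nn_integral_add[symmetric]) (use GG_meas[OF D psi] m2 in auto)
  also have "\<dots> = (\<integral>\<^sup>+z. \<integral>\<^sup>+y. eI \<psi> y z + eI \<psi> z y \<partial>D \<partial>D)"
    unfolding GG_def by (intro nn_integral_cong nn_integral_add[symmetric]) auto
  also have "\<dots> = (\<integral>\<^sup>+z. \<integral>\<^sup>+y. 1 + eE \<psi> y z \<partial>D \<partial>D)"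
    by (intro nn_integral_cong) (auto simp: eI_def eE_def)
  also have "\<dots> = (\<integral>\<^sup>+z. 1 \<partial>D)"
  proof (intro nn_integral_cong)
    fix z assume z: "z \<in> space D"
    have "(\<integral>\<^sup>+y. 1 + eE \<psi> y z \<partial>D) = (\<integral>\<^sup>+y. 1 \<partial>D) + (\<integral>\<^sup>+y. eE \<psi> y z \<partial>D)"
      by (rule nn_integral_add) (use z in \<open>auto simp: eE_def\<close>)
    also have "\<dots> = 1" using tie0[OF D psi at] D by (simp add: prob_space.emeasure_space_1)
    finally show "(\<integral>\<^sup>+y. 1 + eE \<psi> y z \<partial>D) = 1" .
  qed
  also have "\<dots> = 1" using D by (simp add: prob_space.emeasure_space_1)
  finally have S: "Q1 D \<psi> + Q1 D \<psi> = 1" .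
  then have fin: "Q1 D \<psi> < \<top>" by (metis ennreal_add_eq_top ennreal_one_neq_top less_top)
  have "enn2real (Q1 D \<psi> + Q1 D \<psi>) = 1" using S by simp
  then show ?thesis using fin by (simp add: enn2real_plus)
qed

lemma Q2_T3:
  assumes D: "prob_space D" and psi[measurable]: "\<psi> \<in> borel_measurable D"
  shows "Q2 D \<psi> = T3 D (\<lambda>z y w. eI \<psi> y z * eI \<psi> w z)"
  unfolding Q2_def T3_def
proof (rule nn_integral_cong)
  fix z assume z: "z \<in> space D"
  have "(\<integral>\<^sup>+y. \<integral>\<^sup>+w. eI \<psi> y z * eI \<psi> w z \<partial>D \<partial>D) = (\<integral>\<^sup>+y. eI \<psi> y z * GG D \<psi> z \<partial>D)"
    unfolding GG_def by (intro nn_integral_cong nn_integral_cmult) (use z in auto)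
  also have "\<dots> = GG D \<psi> z * GG D \<psi> z"
    by (subst nn_integral_multc) (use z in \<open>auto simp: GG_def\<close>)
  finally show "GG D \<psi> z * GG D \<psi> z = (\<integral>\<^sup>+y. \<integral>\<^sup>+w. eI \<psi> y z * eI \<psi> w z \<partial>D \<partial>D)" by simp
qed

lemma T3_one:
  assumes D: "prob_space D"
  shows "T3 D (\<lambda>z y w. 1) = 1"
  using D by (simp add: T3_def prob_space.emeasure_space_1)

lemma Q2_third:
  assumes D: "prob_space D" and psi[measurable]: "\<psi> \<in> borel_measurable D"
    and at: "\<forall>v. measure (distr D borel \<psi>) {v} = 0"
  shows "enn2real (Q2 D \<psi>) = 1/3"
proof -
  define h1 where "h1 = (\<lambda>z y w. eI \<psi> y z * eI \<psi> w z)"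
  define h2 where "h2 = (\<lambda>z y w. eI \<psi> z y * eI \<psi> w y)"
  define h3 where "h3 = (\<lambda>z y w. eI \<psi> z w * eI \<psi> y w)"
  have m1: "(\<lambda>(z,y,w). h1 z y w) \<in> borel_measurable (D \<Otimes>\<^sub>M (D \<Otimes>\<^sub>M D))"
    unfolding h1_def eI_def by measurable
  have m2: "(\<lambda>(z,y,w). h2 z y w) \<in> borel_measurable (D \<Otimes>\<^sub>M (D \<Otimes>\<^sub>M D))"
    unfolding h2_def eI_def by measurable
  have m3: "(\<lambda>(z,y,w). h3 z y w) \<in> borel_measurable (D \<Otimes>\<^sub>M (D \<Otimes>\<^sub>M D))"
    unfolding h3_def eI_def by measurable
  have m12: "(\<lambda>(z,y,w). h1 z y w + h2 z y w) \<in> borel_measurable (D \<Otimes>\<^sub>M (D \<Otimes>\<^sub>M D))"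
    unfolding h1_def h2_def eI_def by measurable
  have e1: "(\<lambda>(z,y,w). eE \<psi> y z) \<in> borel_measurable (D \<Otimes>\<^sub>M (D \<Otimes>\<^sub>M D))"
    unfolding eE_def by measurable
  have e2: "(\<lambda>(z,y,w). eE \<psi> w z) \<in> borel_measurable (D \<Otimes>\<^sub>M (D \<Otimes>\<^sub>M D))"
    unfolding eE_def by measurable
  have e3: "(\<lambda>(z,y,w). eE \<psi> w y) \<in> borel_measurable (D \<Otimes>\<^sub>M (D \<Otimes>\<^sub>M D))"
    unfolding eE_def by measurable
  have e01: "(\<lambda>(z,y,w). 1 + eE \<psi> y z) \<in> borel_measurable (D \<Otimes>\<^sub>M (D \<Otimes>\<^sub>M D))"
    unfolding eE_def by measurable
  have e012: "(\<lambda>(z,y,w). 1 + eE \<psi> y z + eE \<psi> w z) \<in> borel_measurable (D \<Otimes>\<^sub>M (D \<Otimes>\<^sub>M D))"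
    unfolding eE_def by measurable
  have one: "(\<lambda>(z,y,w). 1::ennreal) \<in> borel_measurable (D \<Otimes>\<^sub>M (D \<Otimes>\<^sub>M D))" by simp
  have t1: "T3 D (\<lambda>z y w. eE \<psi> y z) = 0"
    unfolding T3_def using D tie0[OF D psi at] by (simp add: prob_space.emeasure_space_1 nn_integral_multc)
  have t2: "T3 D (\<lambda>z y w. eE \<psi> w z) = 0"
    unfolding T3_def using tie0[OF D psi at] by simp
  have t3: "T3 D (\<lambda>z y w. eE \<psi> w y) = 0"
    unfolding T3_def using tie0[OF D psi at] by simp
  have Q1': "Q2 D \<psi> = T3 D h1" unfolding h1_def by (rule Q2_T3[OF D psi])
  have Q2': "T3 D h1 = T3 D h2"
    using T3_swap12[OF D m1] by (simp add: h1_def h2_def)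
  have Q3': "T3 D h3 = T3 D h2"
    using T3_swap23[OF D m3] by (simp add: h3_def h2_def)
  have sumeq: "T3 D (\<lambda>z y w. h1 z y w + h2 z y w + h3 z y w) = Q2 D \<psi> + Q2 D \<psi> + Q2 D \<psi>"
    using T3_add[OF D m12 m3] T3_add[OF D m1 m2] Q1' Q2' Q3' by simp
  have lo: "T3 D (\<lambda>z y w. 1) \<le> T3 D (\<lambda>z y w. h1 z y w + h2 z y w + h3 z y w)"
    by (rule T3_mono) (auto simp: h1_def h2_def h3_def eI_def)
  have hi: "T3 D (\<lambda>z y w. h1 z y w + h2 z y w + h3 z y w) \<le> T3 D (\<lambda>z y w. 1 + eE \<psi> y z + eE \<psi> w z + eE \<psi> w y)"
    by (rule T3_mono) (auto simp: h1_def h2_def h3_def eI_def eE_def)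
  have "T3 D (\<lambda>z y w. 1 + eE \<psi> y z + eE \<psi> w z + eE \<psi> w y) = 1"
    using T3_add[OF D e012 e3] T3_add[OF D e01 e2] T3_add[OF D one e1] t1 t2 t3 T3_one[OF D] by simp
  then have S: "Q2 D \<psi> + Q2 D \<psi> + Q2 D \<psi> = 1"
    using lo hi sumeq T3_one[OF D] by (metis antisym)
  then have fin: "Q2 D \<psi> < \<top>" by (metis ennreal_add_eq_top ennreal_one_neq_top less_top)
  have "enn2real (Q2 D \<psi> + Q2 D \<psi> + Q2 D \<psi>) = 1" using S by simp
  then show ?thesis using fin by (simp add: enn2real_plus)
qed




lemma GG_meas_giry:
  assumes psi[measurable]: "\<psi> \<in> borel_measurable M"
  shows "(\<lambda>(D, z). GG D \<psi> z) \<in> borel_measurable (subprob_algebra M \<Otimes>\<^sub>M M)"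
proof -
  have "(\<lambda>x. integral\<^sup>N (fst x) (\<lambda>y. eI \<psi> y (snd x))) \<in> borel_measurable (subprob_algebra M \<Otimes>\<^sub>M M)"
    by (rule nn_integral_measurable_subprob_algebra2[where N=M]) (unfold eI_def, measurable)
  then show ?thesis by (simp add: GG_def split_beta')
qed

lemma Q_meas_giry:
  assumes psi[measurable]: "\<psi> \<in> borel_measurable M"
  shows "(\<lambda>D. Q1 D \<psi>) \<in> borel_measurable (subprob_algebra M)"
    and "(\<lambda>D. Q2 D \<psi>) \<in> borel_measurable (subprob_algebra M)"
proof -
  note GG_meas_giry[OF psi, measurable]
  have "(\<lambda>D. integral\<^sup>N ((\<lambda>D. D) D) (\<lambda>z. GG D \<psi> z)) \<in> borel_measurable (subprob_algebra M)"
    by (rule nn_integral_measurable_subprob_algebra2[where N=M]) measurable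
  then show "(\<lambda>D. Q1 D \<psi>) \<in> borel_measurable (subprob_algebra M)" by (simp add: Q1_def)
  have "(\<lambda>D. integral\<^sup>N ((\<lambda>D. D) D) (\<lambda>z. GG D \<psi> z * GG D \<psi> z)) \<in> borel_measurable (subprob_algebra M)"
    by (rule nn_integral_measurable_subprob_algebra2[where N=M]) measurable
  then show "(\<lambda>D. Q2 D \<psi>) \<in> borel_measurable (subprob_algebra M)" by (simp add: Q2_def)
qed




lemma data_index_eq: "data_index m n = (SIGMA j:{..<m}. {..<n j})"
  by (auto simp: data_index_def)

lemma finite_data_index: "finite (data_index m n)"
  unfolding data_index_eq by auto

lemma own_sub: "i < m \<Longrightarrow> own_index n i \<subseteq> data_index m n"
  by (auto simp: own_index_def data_index_def)

lemma others_sub: "others_index m n i \<subseteq> data_index m n"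
  by (auto simp: others_index_def data_index_def)

lemma own_others_disj: "own_index n i \<inter> others_index m n i = {}"
  by (auto simp: own_index_def others_index_def)

lemma card_own: "card (own_index n i) = n i"
proof -
  have "own_index n i = (\<lambda>l. (i, l)) ` {..<n i}" by (auto simp: own_index_def)
  moreover have "inj_on (\<lambda>l. (i, l)) {..<n i}" by (auto simp: inj_on_def)
  ultimately show ?thesis by (simp add: card_image)
qed

lemma finite_others: "finite (others_index m n i)"
  using others_sub finite_data_index by (rule finite_subset)

lemma finite_own: "finite (own_index n i)"
proof -
  have "own_index n i = (\<lambda>l. (i, l)) ` {..<n i}" by (auto simp: own_index_def)
  then show ?thesis by simp
qed

lemma splits_finite: "finite Ob \<Longrightarrow> finite (splits Ob w)"
  by (rule finite_subset[where B="Ob \<times> Pow Ob"]) (auto simp: splits_def)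

lemma splits_nonempty:
  assumes "finite Ob" "w < card Ob"
  shows "splits Ob w \<noteq> {}"
proof -
  from assms have "Ob \<noteq> {}" by auto
  then obtain t where t: "t \<in> Ob" by auto
  have "w \<le> card (Ob - {t})" using assms t by simp
  then obtain W where "W \<subseteq> Ob - {t}" "card W = w" by (rule obtain_subset_with_card_n)
  then have "(t, W) \<in> splits Ob w" using t by (auto simp: splits_def)
  then show ?thesis by auto
qed




definition Rf :: "'a measure \<Rightarrow> nat \<Rightarrow> (nat \<Rightarrow> 'a \<Rightarrow> real) \<Rightarrow> real" where
  "Rf D K \<phi> = (1 / real K) * (\<Sum>k<K. enn2real (Q1 D (\<phi> k)) - enn2real (Q2 D (\<phi> k)))"

lemma loss_split:
  assumes D: "prob_space D" and phi: "\<forall>k<K. \<phi> k \<in> borel_measurable D"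
    and im: "i < m" and nj: "\<forall>j<m. 1 \<le> n j"
    and sN: "s (card (others_index m n i)) < card (others_index m n i) - 1"
    and tw: "(t, W) \<in> splits (others_index m n i) (s (card (others_index m n i)))"
  shows "integrable (PiM (data_index m n) (\<lambda>_. D)) (\<lambda>\<omega>. loss K \<phi> m n i \<omega> (t, W))"
    and "(\<integral>\<omega>. loss K \<phi> m n i \<omega> (t, W) \<partial>PiM (data_index m n) (\<lambda>_. D))
      = (1 / real (n i + s (card (others_index m n i))) + 1 / real (card (others_index m n i) - 1 - s (card (others_index m n i)))) * Rf D K \<phi>"
proof -
  define N where "N = card (others_index m n i)"
  define Ob where "Ob = others_index m n i"
  define I where "I = data_index m n"
  define A where "A = own_index n i \<union> W"
  define B where "B = others_index m n i - {t} - W"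
  have tO: "t \<in> Ob" and WO: "W \<subseteq> Ob - {t}" and cW: "card W = s N"
    using tw by (auto simp: splits_def Ob_def N_def)
  have fI: "finite I" by (simp add: I_def finite_data_index)
  have fO: "finite Ob" by (simp add: Ob_def finite_others)
  have OI: "Ob \<subseteq> I" by (simp add: Ob_def I_def others_sub)
  have ownI: "own_index n i \<subseteq> I" using im by (simp add: I_def own_sub)
  have tI: "t \<in> I" using tO OI by auto
  have AI: "A \<subseteq> I" using WO OI ownI by (auto simp: A_def)
  have BI: "B \<subseteq> I" using OI by (auto simp: B_def Ob_def)
  have disj: "own_index n i \<inter> Ob = {}" by (simp add: Ob_def own_others_disj)
  have tA: "t \<notin> A" using tO WO disj by (auto simp: A_def)
  have tB: "t \<notin> B" by (simp add: B_def)
  have AB: "A \<inter> B = {}" using disj by (auto simp: A_def B_def Ob_def)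
  have fW: "finite W" using WO fO finite_subset by blast
  have cA: "card A = n i + s N"
    unfolding A_def using disj WO cW fW finite_own card_own
    by (subst card_Un_disjoint) auto
  have cB: "card B = N - 1 - s N"
  proof -
    have "card (Ob - {t} - W) = card (Ob - {t}) - card W"
      using WO fO by (intro card_Diff_subset) (auto intro: finite_subset)
    also have "card (Ob - {t}) = N - 1" using tO fO by (simp add: N_def Ob_def)
    finally show ?thesis using cW by (simp add: B_def Ob_def)
  qed
  have cApos: "card A > 0" using cA nj im by auto
  have cBpos: "card B > 0" using cB sN by (simp add: N_def)
  have lossf: "loss K \<phi> m n i \<omega> (t, W) = (1 / real K) * (\<Sum>k<K.
        (ecdf A (\<lambda>a. \<phi> k (\<omega> a)) (\<phi> k (\<omega> t)) - ecdf B (\<lambda>a. \<phi> k (\<omega> a)) (\<phi> k (\<omega> t)))\<^sup>2)" for \<omega>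
    by (simp add: loss_def A_def B_def)
  note C = comb[OF D _ fI tI AI BI tA tB AB cApos cBpos]
  have intk: "integrable (PiM I (\<lambda>_. D)) (\<lambda>\<omega>. (ecdf A (\<lambda>a. \<phi> k (\<omega> a)) (\<phi> k (\<omega> t)) - ecdf B (\<lambda>a. \<phi> k (\<omega> a)) (\<phi> k (\<omega> t)))\<^sup>2)"
    if "k \<in> {..<K}" for k using C(1)[of "\<phi> k"] phi that by auto
  show "integrable (PiM (data_index m n) (\<lambda>_. D)) (\<lambda>\<omega>. loss K \<phi> m n i \<omega> (t, W))"
    unfolding lossf I_def[symmetric]
    apply (rule Bochner_Integration.integrable_mult_right)
    apply (rule Bochner_Integration.integrable_sum)
    by (rule intk)
  have "(\<integral>\<omega>. loss K \<phi> m n i \<omega> (t, W) \<partial>PiM I (\<lambda>_. D))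
     = (1 / real K) * (\<Sum>k<K. \<integral>\<omega>. (ecdf A (\<lambda>a. \<phi> k (\<omega> a)) (\<phi> k (\<omega> t)) - ecdf B (\<lambda>a. \<phi> k (\<omega> a)) (\<phi> k (\<omega> t)))\<^sup>2 \<partial>PiM I (\<lambda>_. D))"
    unfolding lossf
    by (simp only: integral_mult_right_zero Bochner_Integration.integral_sum[OF intk])
  also have "\<dots> = (1 / real K) * (\<Sum>k<K. (enn2real (Q1 D (\<phi> k)) - enn2real (Q2 D (\<phi> k))) * (1 / real (card A) + 1 / real (card B)))"
    using C(2) phi by (intro arg_cong[where f="\<lambda>x. (1 / real K) * x"] sum.cong) auto
  also have "\<dots> = (1 / real (card A) + 1 / real (card B)) * Rf D K \<phi>"
    by (simp only: Rf_def sum_distrib_right[symmetric]) (simp only: ac_simps)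
  finally show "(\<integral>\<omega>. loss K \<phi> m n i \<omega> (t, W) \<partial>PiM (data_index m n) (\<lambda>_. D))
      = (1 / real (n i + s (card (others_index m n i))) + 1 / real (card (others_index m n i) - 1 - s (card (others_index m n i)))) * Rf D K \<phi>"
    using cA cB by (simp add: I_def N_def)
qed




lemma EL:
  assumes D: "D \<in> space (prob_algebra M)" and phi: "\<forall>k<K. \<phi> k \<in> borel_measurable M"
    and im: "i < m" and nj: "\<forall>j<m. 1 \<le> n j"
    and sN: "s (card (others_index m n i)) < card (others_index m n i) - 1"
  shows "expected_loss D K \<phi> m n s i =
     (1 / real (n i + s (card (others_index m n i))) + 1 / real (card (others_index m n i) - 1 - s (card (others_index m n i)))) * Rf D K \<phi>"
proof -
  define c where "c = (1 / real (n i + s (card (others_index m n i))) + 1 / real (card (others_index m n i) - 1 - s (card (others_index m n i))))"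
  define S where "S = splits (others_index m n i) (s (card (others_index m n i)))"
  have Dp: "prob_space D" and sD: "sets D = sets M" using D by (auto simp: space_prob_algebra)
  have phiD: "\<forall>k<K. \<phi> k \<in> borel_measurable D" using phi measurable_cong_sets[OF sD refl, of "borel :: real measure"] by simp
  have fS: "finite S" unfolding S_def by (rule splits_finite[OF finite_others])
  have neS: "S \<noteq> {}" unfolding S_def by (rule splits_nonempty[OF finite_others]) (use sN in linarith)
  have each: "integrable (PiM (data_index m n) (\<lambda>_. D)) (\<lambda>\<omega>. loss K \<phi> m n i \<omega> tw) \<and>
      (\<integral>\<omega>. loss K \<phi> m n i \<omega> tw \<partial>PiM (data_index m n) (\<lambda>_. D)) = c * Rf D K \<phi>" if "tw \<in> S" for tw
  proof -
    obtain t W where tw: "tw = (t, W)" by (cases tw)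
    have "(t, W) \<in> splits (others_index m n i) (s (card (others_index m n i)))" using that by (simp add: tw S_def)
    note L = loss_split[where s=s and n=n and m=m and i=i and \<phi>=\<phi> and K=K and D=D and t=t and W=W, OF Dp phiD im nj sN this]
    show ?thesis unfolding tw c_def using L by blast
  qed
  have "expected_loss D K \<phi> m n s i = (\<integral>\<omega>. (\<Sum>tw\<in>S. loss K \<phi> m n i \<omega> tw) \<partial>PiM (data_index m n) (\<lambda>_. D)) / real (card S)"
    unfolding expected_loss_def Let_def S_def by (rule integral_divide_zero)
  also have "(\<integral>\<omega>. (\<Sum>tw\<in>S. loss K \<phi> m n i \<omega> tw) \<partial>PiM (data_index m n) (\<lambda>_. D)) = (\<Sum>tw\<in>S. c * Rf D K \<phi>)"
    by (subst Bochner_Integration.integral_sum) (use each in auto)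
  also have "\<dots> / real (card S) = c * Rf D K \<phi>" using fS neS by simp
  finally show ?thesis by (simp add: c_def)
qed

lemma Rf_bounds:
  assumes D: "D \<in> space (prob_algebra M)" and phi: "\<forall>k<K. \<phi> k \<in> borel_measurable M" and K: "1 \<le> K"
  shows "0 \<le> Rf D K \<phi>" "Rf D K \<phi> \<le> 1/4"
    and "atomless_features D K \<phi> \<Longrightarrow> Rf D K \<phi> = 1/6"
proof -
  have Dp: "prob_space D" and sD: "sets D = sets M" using D by (auto simp: space_prob_algebra)
  have phiD: "\<phi> k \<in> borel_measurable D" if "k < K" for k using phi measurable_cong_sets[OF sD refl, of "borel :: real measure"] that by simp
  show "0 \<le> Rf D K \<phi>" unfolding Rf_def
    by (intro mult_nonneg_nonneg sum_nonneg Qbounds(1)[OF Dp phiD]) auto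
  have "(\<Sum>k<K. enn2real (Q1 D (\<phi> k)) - enn2real (Q2 D (\<phi> k))) \<le> (\<Sum>k<K. 1/4)"
    by (intro sum_mono Qbounds(2)[OF Dp phiD]) auto
  then show "Rf D K \<phi> \<le> 1/4" unfolding Rf_def using K by (simp add: field_simps)
  assume at: "atomless_features D K \<phi>"
  have "(\<Sum>k<K. enn2real (Q1 D (\<phi> k)) - enn2real (Q2 D (\<phi> k))) = (\<Sum>k<K. 1/6)"
  proof (intro sum.cong refl)
    fix k assume k: "k \<in> {..<K}"
    have a: "\<forall>v. measure (distr D borel (\<phi> k)) {v} = 0" using at k by (auto simp: atomless_features_def)
    show "enn2real (Q1 D (\<phi> k)) - enn2real (Q2 D (\<phi> k)) = 1/6"
      using Q1_half[OF Dp phiD a] Q2_third[OF Dp phiD a] k by simp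
  qed
  then show "Rf D K \<phi> = 1/6" unfolding Rf_def using K by simp
qed

lemma Rf_meas:
  assumes phi: "\<forall>k<K. \<phi> k \<in> borel_measurable M"
  shows "(\<lambda>D. Rf D K \<phi>) \<in> borel_measurable (prob_algebra M)"
proof -
  have "(\<lambda>D. Rf D K \<phi>) \<in> borel_measurable (subprob_algebra M)"
    unfolding Rf_def
    using phi by (intro borel_measurable_times borel_measurable_const borel_measurable_sum borel_measurable_diff borel_measurable_enn2real Q_meas_giry) auto
  then show ?thesis unfolding prob_algebra_def by (rule measurable_restrict_space1)
qed




theorem mainTheorem8:
  fixes M :: "'a measure" and m K i :: nat and n s :: "nat \<Rightarrow> nat"
    and \<phi> :: "nat \<Rightarrow> 'a \<Rightarrow> real"
    and Pi :: "'a measure measure" and F :: "'a measure set"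
  defines "N \<equiv> card (others_index m n i)"
  defines "c \<equiv> 1 / real (n i + s N) + 1 / real (N - 1 - s N)"
  assumes "2 \<le> m" and "i < m" and "\<forall>j<m. 1 \<le> n j" and "1 \<le> K"
    and "\<forall>k<K. \<phi> k \<in> borel_measurable M"
    and "s N < N - 1"
    and "prob_space Pi" and "sets Pi = sets (prob_algebra M)"
    and "F \<noteq> {}" and "F \<subseteq> space (prob_algebra M)"
  shows "0 \<le> (\<integral>D. expected_loss D K \<phi> m n s i \<partial>Pi)
       \<and> (\<integral>D. expected_loss D K \<phi> m n s i \<partial>Pi) \<le> c / 4
       \<and> 0 \<le> (SUP D\<in>F. expected_loss D K \<phi> m n s i)
       \<and> (SUP D\<in>F. expected_loss D K \<phi> m n s i) \<le> c / 4
       \<and> ((AE D in Pi. atomless_features D K \<phi>) \<longrightarrow>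
            (\<integral>D. expected_loss D K \<phi> m n s i \<partial>Pi) = c / 6)
       \<and> ((\<forall>D\<in>F. atomless_features D K \<phi>) \<longrightarrow>
            (SUP D\<in>F. expected_loss D K \<phi> m n s i) = c / 6)"
proof -
  have sp: "space Pi = space (prob_algebra M)" using assms(10) by (rule sets_eq_imp_space_eq)
  interpret Pi: prob_space Pi by (rule assms(9))
  have sN: "s (card (others_index m n i)) < card (others_index m n i) - 1" using assms(8) by (simp add: N_def)
  have ELc: "expected_loss D K \<phi> m n s i = c * Rf D K \<phi>" if "D \<in> space (prob_algebra M)" for D
    using EL[where s=s and n=n and m=m and i=i and K=K and \<phi>=\<phi> and M=M and D=D, OF that assms(7) assms(4) assms(5) sN] by (simp add: c_def N_def)
  have c0: "0 \<le> c" by (simp add: c_def)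
  have Rb: "0 \<le> Rf D K \<phi>" "Rf D K \<phi> \<le> 1/4" if "D \<in> space (prob_algebra M)" for D
    using Rf_bounds[OF that assms(7) assms(6)] by auto
  have Ra: "atomless_features D K \<phi> \<Longrightarrow> Rf D K \<phi> = 1/6" if "D \<in> space (prob_algebra M)" for D
    using Rf_bounds[OF that assms(7) assms(6)] by auto
  have eb: "0 \<le> expected_loss D K \<phi> m n s i" "expected_loss D K \<phi> m n s i \<le> c / 4" if "D \<in> space (prob_algebra M)" for D
  proof -
    show "0 \<le> expected_loss D K \<phi> m n s i" using ELc[OF that] Rb[OF that] c0 by simp
    have "c * Rf D K \<phi> \<le> c * (1/4)" using Rb[OF that] c0 by (intro mult_left_mono) auto
    then show "expected_loss D K \<phi> m n s i \<le> c / 4" using ELc[OF that] by simp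
  qed
  have Rm: "(\<lambda>D. c * Rf D K \<phi>) \<in> borel_measurable Pi"
    using Rf_meas[OF assms(7)] measurable_cong_sets[OF assms(10) refl, of "borel :: real measure"] by simp
  have int_eq: "(\<integral>D. expected_loss D K \<phi> m n s i \<partial>Pi) = (\<integral>D. c * Rf D K \<phi> \<partial>Pi)"
    by (rule Bochner_Integration.integral_cong[OF refl]) (simp add: ELc sp)
  have intg: "integrable Pi (\<lambda>D. c * Rf D K \<phi>)"
    by (rule Pi.integrable_const_bound[where B="c/4"]) (use Rm eb ELc sp in \<open>auto intro!: AE_I2\<close>)
  have I1: "0 \<le> (\<integral>D. expected_loss D K \<phi> m n s i \<partial>Pi)"
    unfolding int_eq by (rule integral_nonneg_AE) (use eb ELc sp in \<open>auto intro!: AE_I2\<close>)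
  have I2: "(\<integral>D. expected_loss D K \<phi> m n s i \<partial>Pi) \<le> c / 4"
  proof -
    have "(\<integral>D. c * Rf D K \<phi> \<partial>Pi) \<le> (\<integral>D. c / 4 \<partial>Pi)"
      by (rule integral_mono[OF intg]) (use eb ELc sp in auto)
    then show ?thesis unfolding int_eq by (simp add: Pi.prob_space)
  qed
  obtain D0 where D0: "D0 \<in> F" using assms(11) by auto
  have bdd: "bdd_above ((\<lambda>D. expected_loss D K \<phi> m n s i) ` F)"
    using eb assms(12) by (intro bdd_aboveI[where M="c/4"]) auto
  have S1: "0 \<le> (SUP D\<in>F. expected_loss D K \<phi> m n s i)"
  proof -
    have "0 \<le> expected_loss D0 K \<phi> m n s i" using eb D0 assms(12) by auto
    also have "\<dots> \<le> (SUP D\<in>F. expected_loss D K \<phi> m n s i)" by (rule cSUP_upper[OF D0 bdd])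
    finally show ?thesis .
  qed
  have S2: "(SUP D\<in>F. expected_loss D K \<phi> m n s i) \<le> c / 4"
    by (rule cSUP_least) (use assms(11) assms(12) eb in auto)
  have A1: "(AE D in Pi. atomless_features D K \<phi>) \<longrightarrow> (\<integral>D. expected_loss D K \<phi> m n s i \<partial>Pi) = c / 6"
  proof
    assume ae: "AE D in Pi. atomless_features D K \<phi>"
    have "AE D in Pi. c * Rf D K \<phi> = c / 6"
      using ae by (rule AE_mp) (use Ra sp in \<open>auto intro!: AE_I2\<close>)
    then have "(\<integral>D. c * Rf D K \<phi> \<partial>Pi) = (\<integral>D. c / 6 \<partial>Pi)"
      by (intro integral_cong_AE Rm) auto
    then show "(\<integral>D. expected_loss D K \<phi> m n s i \<partial>Pi) = c / 6" unfolding int_eq by (simp add: Pi.prob_space)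
  qed
  have A2: "(\<forall>D\<in>F. atomless_features D K \<phi>) \<longrightarrow> (SUP D\<in>F. expected_loss D K \<phi> m n s i) = c / 6"
  proof
    assume at: "\<forall>D\<in>F. atomless_features D K \<phi>"
    have "(SUP D\<in>F. expected_loss D K \<phi> m n s i) = (SUP D\<in>F. c / 6)"
      using at assms(12) ELc Ra by (intro SUP_cong refl) auto
    also have "\<dots> = c / 6" using assms(11) by simp
    finally show "(SUP D\<in>F. expected_loss D K \<phi> m n s i) = c / 6" .
  qed
  show ?thesis using I1 I2 S1 S2 A1 A2 by blast
qed


end
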